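(* Let $a<b$ be real numbers and let $h,g:[a,b)\to\mathbb{R}$ be continuous functions which are differentiable on $(a,b)$, with $h'(t)>0$ for all $t\in(a,b)$, and such that $h$ is increasing and not constant on any neighborhood of $a$. For $x\in(a,b)$ let $\xi(x)$ be the supremum of the set of numbers $\tau\in(a,x)$ satisfying $$\frac{g(x)-g(a)}{h(x)-h(a)}=\frac{g'(\tau)}{h'(\tau)}$$ (this set is nonempty by Cauchy's mean value theorem). Suppose that the limit $\lim_{x\to a}\frac{g(x)-g(a)}{h(x)-h(a)}$ exists and is finite. Then $$\varlimsup_{x\to a}\frac{h(\xi(x))-h(a)}{h(x)-h(a)}\ \geq\ \frac1e.$$
   Context: Limits at $a$ are right-hand limits. *)

theory Defs
  imports "HOL-Analysis.Analysis"
begin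

definition cmv_xi ::
  "(real \<Rightarrow> real) \<Rightarrow> (real \<Rightarrow> real) \<Rightarrow> (real \<Rightarrow> real) \<Rightarrow> (real \<Rightarrow> real) \<Rightarrow> real \<Rightarrow> real \<Rightarrow> real" where
  "cmv_xi h g h' g' a x =
     Sup {\<tau> \<in> {a<..<x}. (g x - g a) / (h x - h a) = g' \<tau> / h' \<tau>}"

end

theory Submission
  imports Defs
begin

lemma window_inj:
  fixes y x :: real and H G H' G' :: "real \<Rightarrow> real"
  assumes "y < x"
    and cH: "continuous_on {y..x} H" and cG: "continuous_on {y..x} G"
    and dH: "\<And>t. y < t \<Longrightarrow> t < x \<Longrightarrow> (H has_real_derivative H' t) (at t)"
    and dG: "\<And>t. y < t \<Longrightarrow> t < x \<Longrightarrow> (G has_real_derivative G' t) (at t)"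
    and C: "\<And>t. y < t \<Longrightarrow> t < x \<Longrightarrow> G' t \<noteq> k * H' t"
  shows "inj_on (\<lambda>t. G t - k * H t) {y..x}"
proof -
  have main: "t1 = t2" if hyp: "t1 \<in> {y..x}" "t2 \<in> {y..x}" "t1 < t2"
     "G t1 - k * H t1 = G t2 - k * H t2" for t1 t2
  proof -
    have sub: "{t1..t2} \<subseteq> {y..x}" using that by auto
    have cont: "continuous_on {t1..t2} (\<lambda>t. G t - k * H t)"
      by (intro continuous_intros continuous_on_subset[OF cG sub] continuous_on_subset[OF cH sub])
    have der: "((\<lambda>t. G t - k * H t) has_real_derivative (G' t - k * H' t)) (at t)"
      if "t1 < t" "t < t2" for t
      using that sub \<open>t1 \<in> _\<close> \<open>t2 \<in> _\<close>
      by (intro DERIV_diff DERIV_cmult dG dH) auto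
    obtain z where z: "t1 < z" "z < t2" "((\<lambda>t. G t - k * H t) has_real_derivative 0) (at z)"
    proof -
      have dif: "(\<lambda>t. G t - k * H t) differentiable (at t)" if "t1 < t" "t < t2" for t
        using der[OF that] real_differentiable_def by blast
      have eq: "G t1 - k * H t1 = G t2 - k * H t2" "t1 < t2" using hyp by auto
      show ?thesis using Rolle[OF eq(2) eq(1) cont dif] that by blast
    qed
    have "G' z - k * H' z = 0" using DERIV_unique[OF der[OF z(1,2)] z(3)] .
    moreover have "y < z" "z < x" using z that by auto
    ultimately show ?thesis using C by auto
  qed
  show ?thesis
    by (rule inj_onI) (metis main linorder_neqE_linordered_idom)
qed

lemma inv_facts:
  fixes a x0 :: real and H :: "real \<Rightarrow> real"
  assumes ax: "a < x0" and cH: "continuous_on {a..x0} H" and sm: "strict_mono_on {a..x0} H"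
    and Ha: "H a = 0"
  obtains Hi where "continuous_on {0..H x0} Hi"
    "\<And>s. s \<in> {0..H x0} \<Longrightarrow> Hi s \<in> {a..x0} \<and> H (Hi s) = s"
    "\<And>t. t \<in> {a..x0} \<Longrightarrow> Hi (H t) = t"
proof -
  define Hi where "Hi = inv_into {a..x0} H"
  have inj: "inj_on H {a..x0}" using strict_mono_on_imp_inj_on[OF sm] .
  have inv1: "Hi (H t) = t" if "t \<in> {a..x0}" for t
    unfolding Hi_def using inv_into_f_f[OF inj that] .
  have img: "H ` {a..x0} = {0..H x0}"
  proof
    show "H ` {a..x0} \<subseteq> {0..H x0}"
    proof
      fix s assume "s \<in> H ` {a..x0}"
      then obtain t where t: "t \<in> {a..x0}" "s = H t" by auto
      have "H a \<le> H t" "H t \<le> H x0"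
        using t ax strict_mono_on_less_eq[OF sm] by auto
      then show "s \<in> {0..H x0}" using t Ha by auto
    qed
  next
    show "{0..H x0} \<subseteq> H ` {a..x0}"
    proof
      fix s assume s: "s \<in> {0..H x0}"
      then obtain t where "a \<le> t" "t \<le> x0" "H t = s"
        using IVT'[of H a s x0] cH Ha ax by auto
      then show "s \<in> H ` {a..x0}" by auto
    qed
  qed
  have inv2: "Hi s \<in> {a..x0} \<and> H (Hi s) = s" if "s \<in> {0..H x0}" for s
    using that img unfolding Hi_def by (metis f_inv_into_f inv_into_into)
  have "continuous_on (H ` {a..x0}) Hi"
    by (rule continuous_on_inv[OF cH]) (use inv1 in auto)
  then have "continuous_on {0..H x0} Hi" using img by simp
  then show ?thesis using that inv1 inv2 by blast
qed

lemma core_plus: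
  fixes a x0 c L u :: real and n :: nat and H G H' G' :: "real \<Rightarrow> real"
  assumes ax: "a < x0" and cH: "continuous_on {a..x0} H" and cG: "continuous_on {a..x0} G"
    and Ha: "H a = 0"
    and dH: "\<And>t. a < t \<Longrightarrow> t < x0 \<Longrightarrow> (H has_real_derivative H' t) (at t)"
    and dG: "\<And>t. a < t \<Longrightarrow> t < x0 \<Longrightarrow> (G has_real_derivative G' t) (at t)"
    and sm: "strict_mono_on {a..x0} H"
    and lim: "((\<lambda>x. G x / H x) \<longlongrightarrow> L) (at_right a)"
    and C: "\<And>x t. a < t \<Longrightarrow> t < x \<Longrightarrow> x \<le> x0 \<Longrightarrow> c * H x \<le> H t \<Longrightarrow> G' t \<noteq> G x / H x * H' t"
    and u: "0 < u" "u < 1" and n2: "2 \<le> n" and un: "u ^ n = c" and nu: "1 < real n * (1 - u)"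
    and plus: "\<And>x y. a < y \<Longrightarrow> y < x \<Longrightarrow> x \<le> x0 \<Longrightarrow> H y = c * H x \<Longrightarrow> G y / H y < G x / H x"
  shows False
proof -
  obtain Hi where Hic: "continuous_on {0..H x0} Hi"
    and Hi1: "\<And>s. s \<in> {0..H x0} \<Longrightarrow> Hi s \<in> {a..x0} \<and> H (Hi s) = s"
    and Hi2: "\<And>t. t \<in> {a..x0} \<Longrightarrow> Hi (H t) = t"
    using inv_facts[OF ax cH sm Ha] by blast
  define H0 where "H0 = H x0"
  have H0: "0 < H0" using strict_mono_on_less[OF sm, of a x0] ax Ha unfolding H0_def by auto
  define xs where "xs i = Hi (u ^ i * H0)" for i
  define p where "p i = G (xs i) / H (xs i)" for i
  have uin: "u ^ i * H0 \<in> {0..H x0}" for i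
  proof -
    have "u ^ i \<le> 1" using u by (simp add: power_le_one)
    then show ?thesis using H0 u unfolding H0_def by (auto simp: mult_le_cancel_right1)
  qed
  have xs_in: "xs i \<in> {a..x0}" and Hxs: "H (xs i) = u ^ i * H0" for i
    using Hi1[OF uin] unfolding xs_def H0_def by auto
  have Hpos: "0 < H (xs i)" for i using Hxs H0 u by simp
  have xs_gt: "a < xs i" for i
    using xs_in[of i] Hpos[of i] Ha by (cases "xs i = a") auto
  have xs_less: "xs j < xs i" if "i < j" for i j
  proof -
    have "u ^ j < u ^ i" using u that by (simp add: power_strict_decreasing)
    then have "H (xs j) < H (xs i)" using Hxs H0 by simp
    then show ?thesis using strict_mono_on_less[OF sm xs_in xs_in] by blast
  qed
  have Gxs: "G (xs j) = p j * H (xs j)" for j using Hpos[of j] unfolding p_def by simp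
  have pplus: "p (i + n) < p i" for i
  proof -
    have "H (xs (i+n)) = c * H (xs i)" using Hxs un by (simp add: power_add algebra_simps)
    then show ?thesis unfolding p_def
      using plus[OF xs_gt[of "i+n"] xs_less[of i "i+n"]] xs_in[of i] n2 by auto
  qed
  have win: "u ^ (i+n) * (p (i+n) - p i) < u ^ m * (p m - p i) \<and> u ^ m * (p m - p i) < 0"
    if im: "i < m" "m < i + n" for i m
  proof -
    define phi where "phi t = G t - p i * H t" for t
    have sub: "{xs (i+n)..xs i} \<subseteq> {a..x0}" using xs_in by auto
    have inj: "inj_on phi {xs (i+n)..xs i}"
      unfolding phi_def
    proof (rule window_inj[where H'=H' and G'=G'])
      show "xs (i+n) < xs i" using xs_less n2 by simp
      show "continuous_on {xs (i + n)..xs i} H" using continuous_on_subset[OF cH sub] .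
      show "continuous_on {xs (i + n)..xs i} G" using continuous_on_subset[OF cG sub] .
      fix t assume t: "xs (i+n) < t" "t < xs i"
      have tin: "t \<in> {a..x0}" using t xs_in[of i] xs_in[of "i+n"] by auto
      show "(H has_real_derivative H' t) (at t)" "(G has_real_derivative G' t) (at t)"
        using dH dG t xs_in[of i] xs_gt[of "i+n"] by auto
      have "H (xs (i+n)) < H t" using strict_mono_on_less[OF sm xs_in tin] t by blast
      moreover have "H (xs (i+n)) = c * H (xs i)" using Hxs un by (simp add: power_add algebra_simps)
      ultimately have "c * H (xs i) \<le> H t" by simp
      then show "G' t \<noteq> p i * H' t"
        using C[of t "xs i"] t xs_gt[of "i+n"] xs_in[of i] unfolding p_def by auto
    qed
    have cphi: "continuous_on {xs (i+n)..xs i} phi"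
      unfolding phi_def
      by (intro continuous_intros continuous_on_subset[OF cG sub] continuous_on_subset[OF cH sub])
    have mono: "(phi (xs (i+n)) < phi (xs m) \<and> phi (xs m) < phi (xs i)) \<or>
                (phi (xs i) < phi (xs m) \<and> phi (xs m) < phi (xs (i+n)))"
      by (rule continuous_inj_imp_mono[OF xs_less[OF im(2)] xs_less[OF im(1)] cphi inj])
    have phij: "phi (xs j) = u ^ j * H0 * (p j - p i)" for j
      unfolding phi_def using Gxs[of j] Hxs[of j] by (simp add: algebra_simps)
    have neg: "phi (xs (i+n)) < phi (xs i)"
      using phij[of "i+n"] phij[of i] pplus[of i] H0 u by (simp add: mult_pos_neg)
    from mono neg have "phi (xs (i+n)) < phi (xs m) \<and> phi (xs m) < phi (xs i)" by auto
    then have "u ^ (i+n) * H0 * (p (i+n) - p i) < u ^ m * H0 * (p m - p i) \<and> u ^ m * H0 * (p m - p i) < 0"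
      using phij by simp
    then show ?thesis using H0
      by (metis (no_types, lifting) mult.assoc mult.commute mult_less_cancel_left_pos mult_zero_left)
  qed
  have W1: "(1 - u) * (p i - p (i+n)) \<le> p (i+n-1) - p (i+n)" for i
  proof -
    have "u ^ (i+n) * (p (i+n) - p i) < u ^ (i+n-1) * (p (i+n-1) - p i)"
      using win[of i "i+n-1"] n2 by auto
    moreover have "u ^ (i+n) = u ^ (i+n-1) * u" using n2
      by (metis Suc_diff_1 add_gr_0 less_le_trans pos2 power_Suc2)
    ultimately have "u ^ (i+n-1) * (u * (p (i+n) - p i)) < u ^ (i+n-1) * (p (i+n-1) - p i)"
      by (simp add: algebra_simps)
    then have "u * (p (i+n) - p i) < p (i+n-1) - p i"
      using u by (simp add: mult_less_cancel_left_pos)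
    then show ?thesis by (simp add: algebra_simps)
  qed
  have W2: "p (n-1) \<le> p j" if "j < n" for j
  proof (cases "j = n - 1")
    case False
    then have "j < n - 1" using that by auto
    then have "u ^ (n-1) * (p (n-1) - p j) < 0" using win[of j "n-1"] n2 by auto
    then show ?thesis using u by (simp add: mult_less_0_iff)
  qed simp
  have tele: "(\<Sum>i<N. p (i+n-1) - p (i+n)) = p (n-1) - p (N+n-1)" for N
  proof -
    have "(\<Sum>i<N. p (i+n-1) - p (i+n)) = (\<Sum>i<N. (\<lambda>k. p (k+n-1)) i - (\<lambda>k. p (k+n-1)) (Suc i))"
      using n2 by (intro sum.cong) auto
    also have "\<dots> = p (n-1) - p (N+n-1)" by (subst sum_lessThan_telescope') simp
    finally show ?thesis .
  qed
  have blk: "(\<Sum>i<N. p i - p (i+n)) = (\<Sum>j<n. p j) - (\<Sum>j<n. p (N+j))" for N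
  proof (induction N)
    case 0 then show ?case by simp
  next
    case (Suc N)
    have "(\<Sum>j<n. p (N+j)) - (\<Sum>j<n. p (Suc N+j)) = (\<Sum>j<n. p (N+j) - p (N + Suc j))"
      by (simp add: sum_subtractf)
    also have "\<dots> = p (N + 0) - p (N + n)"
      using sum_lessThan_telescope'[of "\<lambda>j. p (N+j)" n] by simp
    finally have "(\<Sum>j<n. p (N+j)) - (\<Sum>j<n. p (Suc N+j)) = p N - p (N + n)" by simp
    then show ?case using Suc.IH by (simp add: algebra_simps)
  qed
  have ineq: "(1 - u) * ((\<Sum>j<n. p j) - (\<Sum>j<n. p (N+j))) \<le> p (n-1) - p (N+n-1)" for N
  proof -
    have "(1 - u) * ((\<Sum>j<n. p j) - (\<Sum>j<n. p (N+j))) = (\<Sum>i<N. (1 - u) * (p i - p (i+n)))"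
      using blk[of N] by (simp only: sum_distrib_left[symmetric])
    also have "\<dots> \<le> (\<Sum>i<N. p (i+n-1) - p (i+n))" by (intro sum_mono W1)
    also have "\<dots> = p (n-1) - p (N+n-1)" by (rule tele)
    finally show ?thesis .
  qed
  have xs_lim: "xs \<longlonglongrightarrow> a"
  proof -
    have "(\<lambda>i. u ^ i * H0) \<longlonglongrightarrow> 0 * H0"
      by (intro tendsto_mult tendsto_const LIMSEQ_power_zero) (use u in auto)
    then have "(\<lambda>i. Hi (u ^ i * H0)) \<longlonglongrightarrow> Hi 0"
      using continuous_on_tendsto_compose[OF Hic, of "\<lambda>i. u ^ i * H0" 0 sequentially] uin H0
      unfolding H0_def by auto
    moreover have "Hi 0 = a" using Hi2[of a] Ha ax by auto
    ultimately show ?thesis unfolding xs_def by simp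
  qed
  have "filterlim xs (at_right a) sequentially"
    by (rule tendsto_imp_filterlim_at_right[OF xs_lim]) (use xs_gt in auto)
  then have p_lim: "p \<longlonglongrightarrow> L"
    unfolding p_def using filterlim_compose[OF lim] by blast
  have lim1: "(\<lambda>N. (1 - u) * ((\<Sum>j<n. p j) - (\<Sum>j<n. p (N+j)))) \<longlonglongrightarrow> (1 - u) * ((\<Sum>j<n. p j) - (\<Sum>j<n. L))"
    by (intro tendsto_intros LIMSEQ_ignore_initial_segment[OF p_lim, simplified add.commute])
  have lim2: "(\<lambda>N. p (n-1) - p (N+n-1)) \<longlonglongrightarrow> p (n-1) - L"
  proof -
    have "(\<lambda>N. p (N + (n-1))) \<longlonglongrightarrow> L" by (rule LIMSEQ_ignore_initial_segment[OF p_lim])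
    moreover have "\<And>N. N + n - 1 = N + (n - 1)" using n2 by auto
    ultimately show ?thesis by (intro tendsto_intros) simp
  qed
  have key: "(1 - u) * ((\<Sum>j<n. p j) - real n * L) \<le> p (n-1) - L"
    using LIMSEQ_le[OF lim1 lim2] ineq by auto
  have "real n * p (n-1) \<le> (\<Sum>j<n. p j)"
    using sum_mono[of "{..<n}" "\<lambda>j. p (n-1)" p] W2 by auto
  then have "(1 - u) * (real n * (p (n-1) - L)) \<le> p (n-1) - L"
    using key u by (smt (verit, ccfv_SIG) mult_left_mono right_diff_distrib)
  then have le: "(real n * (1 - u)) * (p (n-1) - L) \<le> 1 * (p (n-1) - L)" by (simp add: algebra_simps)
  have dec: "decseq (\<lambda>k. p (n - 1 + k * n))"
    unfolding decseq_Suc_iff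
  proof
    fix k
    have "p ((n - 1 + k * n) + n) < p (n - 1 + k * n)" by (rule pplus)
    moreover have "n - 1 + Suc k * n = (n - 1 + k * n) + n" by simp
    ultimately show "p (n - 1 + Suc k * n) \<le> p (n - 1 + k * n)" by (simp only: less_imp_le)
  qed
  have "strict_mono (\<lambda>k. n - 1 + k * n)"
  proof (intro strict_monoI)
    fix x y :: nat assume "x < y"
    then have "x * n < y * n" using n2 by simp
    then show "n - 1 + x * n < n - 1 + y * n" by (rule add_strict_left_mono)
  qed
  from LIMSEQ_subseq_LIMSEQ[OF p_lim this]
  have "(\<lambda>k. p (n - 1 + k * n)) \<longlonglongrightarrow> L" by (simp add: o_def)
  from decseq_ge[OF dec this, of 1] have "L \<le> p (n - 1 + n)" by simp
  moreover have "p (n - 1 + n) < p (n-1)" using pplus[of "n-1"] by simp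
  ultimately have "0 < p (n-1) - L" by simp
  with le have "real n * (1 - u) \<le> 1" by (simp add: mult_le_cancel_right_pos)
  with nu show False by simp
qed

lemma choose_nu:
  fixes c :: real
  assumes "0 < c" "c < exp (-1)"
  obtains n :: nat and u :: real where "0 < u" "u < 1" "2 \<le> n" "u ^ n = c" "1 < real n * (1 - u)"
proof -
  define k where "k = - ln c"
  have k1: "1 < k" unfolding k_def using assms
    by (metis exp_less_cancel_iff exp_ln less_minus_iff minus_minus)
  have lk: "0 < ln k" using k1 by simp
  define n where "n = nat \<lceil>k / ln k\<rceil> + 2"
  have n2: "2 \<le> n" unfolding n_def by simp
  have nk: "k / ln k < real n" unfolding n_def by linarith
  have npos: "0 < real n" using n2 by simp
  define u where "u = exp (- k / real n)"
  have u0: "0 < u" unfolding u_def by simp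
  have u1: "u < 1" unfolding u_def using k1 npos by simp
  have un: "u ^ n = c"
  proof -
    have "u ^ n = exp (real n * (- k / real n))" unfolding u_def by (simp add: exp_of_nat_mult[symmetric])
    also have "\<dots> = exp (- k)" using npos by simp
    also have "\<dots> = c" unfolding k_def using assms by simp
    finally show ?thesis .
  qed
  have "1 + k / real n \<le> exp (k / real n)" by (rule exp_ge_add_one_self)
  then have "u * (1 + k / real n) \<le> u * exp (k / real n)" using u0 by simp
  also have "u * exp (k / real n) = 1" unfolding u_def by (simp add: exp_minus field_simps)
  finally have a1: "u * k / real n \<le> 1 - u" by (simp add: algebra_simps)
  have "k / real n < ln k" using nk lk npos by (simp add: field_simps)
  then have "exp (k / real n) < k" using k1 by (metis exp_less_cancel_iff exp_ln less_trans zero_less_one)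
  then have "1 < k * u" unfolding u_def by (simp add: exp_minus field_simps)
  also have "k * u \<le> real n * (1 - u)" using a1 npos by (simp add: field_simps)
  finally show ?thesis using that u0 u1 n2 un by blast
qed

lemma core:
  fixes a x0 c L :: real and H G H' G' :: "real \<Rightarrow> real"
  assumes ax: "a < x0" and cH: "continuous_on {a..x0} H" and cG: "continuous_on {a..x0} G"
    and Ha: "H a = 0"
    and dH: "\<And>t. a < t \<Longrightarrow> t < x0 \<Longrightarrow> (H has_real_derivative H' t) (at t)"
    and dG: "\<And>t. a < t \<Longrightarrow> t < x0 \<Longrightarrow> (G has_real_derivative G' t) (at t)"
    and sm: "strict_mono_on {a..x0} H"
    and lim: "((\<lambda>x. G x / H x) \<longlongrightarrow> L) (at_right a)"
    and C: "\<And>x t. a < t \<Longrightarrow> t < x \<Longrightarrow> x \<le> x0 \<Longrightarrow> c * H x \<le> H t \<Longrightarrow> G' t \<noteq> G x / H x * H' t"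
    and c: "0 < c" "c < exp (-1)"
  shows False
proof -
  obtain n :: nat and u :: real where nu: "0 < u" "u < 1" "2 \<le> n" "u ^ n = c" "1 < real n * (1 - u)"
    using choose_nu[OF c] by blast
  have c1: "c < 1" using c by (smt (verit) exp_less_one_iff)
  obtain Hi where Hic: "continuous_on {0..H x0} Hi"
    and Hi1: "\<And>s. s \<in> {0..H x0} \<Longrightarrow> Hi s \<in> {a..x0} \<and> H (Hi s) = s"
    and Hi2: "\<And>t. t \<in> {a..x0} \<Longrightarrow> Hi (H t) = t"
    using inv_facts[OF ax cH sm Ha] by blast
  define Q where "Q x = G x / H x" for x
  define y where "y x = Hi (c * H x)" for x
  have Hpos: "0 < H x" if "x \<in> {a<..x0}" for x
    using strict_mono_on_less[OF sm, of a x] that ax Ha by auto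
  have Hle: "H x \<le> H x0" if "x \<in> {a<..x0}" for x
    using strict_mono_on_less_eq[OF sm, of x x0] that ax by auto
  have cHin: "c * H x \<in> {0..H x0}" if "x \<in> {a<..x0}" for x
  proof -
    have "c * H x \<le> 1 * H x" using c1 Hpos[OF that] by (intro mult_right_mono) auto
    moreover have "0 \<le> c * H x" using Hpos[OF that] c by simp
    ultimately show ?thesis using Hle[OF that] by auto
  qed
  have y_props: "a < y x \<and> y x < x \<and> H (y x) = c * H x" if x: "x \<in> {a<..x0}" for x
  proof -
    have yin: "y x \<in> {a..x0}" and Hy: "H (y x) = c * H x" using Hi1[OF cHin[OF x]] unfolding y_def by auto
    have "0 < H (y x)" using Hy Hpos[OF x] c by simp
    then have "y x \<noteq> a" using Ha by auto
    moreover have "H (y x) < H x" using Hy Hpos[OF x] c1 by simp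
    then have "y x < x" using strict_mono_on_less[OF sm yin] x by auto
    ultimately show ?thesis using yin Hy by auto
  qed
  define D where "D x = Q (y x) - Q x" for x
  have Dnz: "D x \<noteq> 0" if x: "x \<in> {a<..x0}" for x
  proof
    assume D0: "D x = 0"
    have yp: "a < y x" "y x < x" "H (y x) = c * H x" using y_props[OF x] by auto
    have sub: "{y x..x} \<subseteq> {a..x0}" using yp x by auto
    have inj: "inj_on (\<lambda>t. G t - Q x * H t) {y x..x}"
    proof (rule window_inj[where H'=H' and G'=G'])
      show "y x < x" by fact
      show "continuous_on {y x..x} H" using continuous_on_subset[OF cH sub] .
      show "continuous_on {y x..x} G" using continuous_on_subset[OF cG sub] .
      fix t assume t: "y x < t" "t < x"
      have tin: "t \<in> {a..x0}" using t yp x by auto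
      show "(H has_real_derivative H' t) (at t)" "(G has_real_derivative G' t) (at t)"
        using dH dG t yp x by auto
      have yin: "y x \<in> {a..x0}" using yp x by auto
      have "H (y x) < H t" using strict_mono_on_less[OF sm yin tin] t by blast
      then have "c * H x \<le> H t" using yp by simp
      moreover have "a < t" using yp t by simp
      moreover have "x \<le> x0" using x by simp
      ultimately show "G' t \<noteq> Q x * H' t" unfolding Q_def using C t(2) by blast
    qed
    have "G (y x) - Q x * H (y x) = G x - Q x * H x"
    proof -
      have "Q (y x) = Q x" using D0 unfolding D_def by simp
      moreover have "y x \<in> {a<..x0}" using yp x by auto
      then have "H (y x) \<noteq> 0" using Hpos[of "y x"] by simp
      then have "G (y x) = Q (y x) * H (y x)" unfolding Q_def by simp
      ultimately have "G (y x) = Q x * H (y x)" by simp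
      moreover have "G x = Q x * H x" using Hpos[OF x] unfolding Q_def by simp
      ultimately show ?thesis by simp
    qed
    moreover have "y x \<in> {y x..x}" "x \<in> {y x..x}" using yp by auto
    ultimately have "y x = x" using inj_onD[OF inj] by blast
    then show False using yp by simp
  qed
  have contQ: "continuous_on {a<..x0} Q"
    unfolding Q_def
    by (intro continuous_on_divide continuous_on_subset[OF cG] continuous_on_subset[OF cH])
       (use Hpos in force)+
  have conty: "continuous_on {a<..x0} y"
    unfolding y_def
  proof -
    have "continuous_on {a<..x0} (\<lambda>x. c * H x)"
      by (intro continuous_on_mult continuous_on_const continuous_on_subset[OF cH]) auto
    moreover have "(\<lambda>x. c * H x) ` {a<..x0} \<subseteq> {0..H x0}" using cHin by blast
    ultimately show "continuous_on {a<..x0} (\<lambda>x. Hi (c * H x))"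
      using continuous_on_compose2[OF Hic] by blast
  qed
  have contD: "continuous_on {a<..x0} D"
    unfolding D_def
  proof -
    have "y ` {a<..x0} \<subseteq> {a<..x0}" using y_props by force
    then have "continuous_on {a<..x0} (\<lambda>x. Q (y x))" using continuous_on_compose2[OF contQ conty] by blast
    then show "continuous_on {a<..x0} (\<lambda>x. Q (y x) - Q x)" using contQ by (intro continuous_on_diff)
  qed
  have x0in: "x0 \<in> {a<..x0}" using ax by auto
  have sign: "(\<forall>x\<in>{a<..x0}. D x < 0) \<or> (\<forall>x\<in>{a<..x0}. 0 < D x)"
  proof (cases "D x0 < 0")
    case True
    have "D x < 0" if x: "x \<in> {a<..x0}" for x
    proof (rule ccontr)
      assume "\<not> D x < 0"
      then have "0 \<le> D x" by simp
      moreover have "{x..x0} \<subseteq> {a<..x0}" using x by auto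
      then have "continuous_on {x..x0} D" by (rule continuous_on_subset[OF contD])
      ultimately obtain z where "x \<le> z" "z \<le> x0" "D z = 0"
        using IVT2'[of D x0 0 x] True x by auto
      then show False using Dnz[of z] x by auto
    qed
    then show ?thesis by blast
  next
    case False
    then have pos: "0 < D x0" using Dnz[OF x0in] by simp
    have "0 < D x" if x: "x \<in> {a<..x0}" for x
    proof (rule ccontr)
      assume "\<not> 0 < D x"
      then have "D x \<le> 0" by simp
      moreover have "{x..x0} \<subseteq> {a<..x0}" using x by auto
      then have "continuous_on {x..x0} D" by (rule continuous_on_subset[OF contD])
      ultimately obtain z where "x \<le> z" "z \<le> x0" "D z = 0"
        using IVT'[of D x 0 x0] pos x by auto
      then show False using Dnz[of z] x by auto
    qed
    then show ?thesis by blast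
  qed
  have yid: "yy = y x" if "a < yy" "yy < x" "x \<le> x0" "H yy = c * H x" for x yy
    using Hi2[of yy] that unfolding y_def by auto
  from sign show False
  proof
    assume neg: "\<forall>x\<in>{a<..x0}. D x < 0"
    show False
    proof (rule core_plus[OF ax cH cG Ha dH dG sm lim C nu])
      fix x yy assume h: "a < yy" "yy < x" "x \<le> x0" "H yy = c * H x"
      then have "D x < 0" using neg by auto
      then show "G yy / H yy < G x / H x" using yid[OF h] unfolding D_def Q_def by simp
    qed
  next
    assume pos: "\<forall>x\<in>{a<..x0}. 0 < D x"
    show False
    proof (rule core_plus[OF ax cH _ Ha dH _ sm _ _ nu, where G="\<lambda>t. - G t" and G'="\<lambda>t. - G' t" and L="-L"])
      show "continuous_on {a..x0} (\<lambda>t. - G t)" using cG by (intro continuous_intros)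
      show "((\<lambda>t. - G t) has_real_derivative - G' t) (at t)" if "a < t" "t < x0" for t
        using dG[OF that] by (rule DERIV_minus)
      show "((\<lambda>x. - G x / H x) \<longlongrightarrow> - L) (at_right a)"
        using tendsto_minus[OF lim] by simp
      show "- G' t \<noteq> - G x / H x * H' t" if "a < t" "t < x" "x \<le> x0" "c * H x \<le> H t" for x t
        using C[OF that] by simp
      fix x yy assume h: "a < yy" "yy < x" "x \<le> x0" "H yy = c * H x"
      then have "0 < D x" using pos by auto
      then show "- G yy / H yy < - G x / H x" using yid[OF h] unfolding D_def Q_def by simp
    qed
  qed
qed

theorem theorem4:
  fixes a b :: real and h g h' g' :: "real \<Rightarrow> real"
  assumes "a < b"
    and "continuous_on {a..<b} h" and "continuous_on {a..<b} g"
    and "\<And>t. t \<in> {a<..<b} \<Longrightarrow> (h has_real_derivative h' t) (at t)"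
    and "\<And>t. t \<in> {a<..<b} \<Longrightarrow> (g has_real_derivative g' t) (at t)"
    and "\<And>t. t \<in> {a<..<b} \<Longrightarrow> h' t > 0"
    and "mono_on {a..<b} h"
    and "\<And>\<epsilon>. \<epsilon> > 0 \<Longrightarrow> \<not> (\<exists>c. \<forall>t \<in> {a..<b} \<inter> {a..<a+\<epsilon>}. h t = c)"
    and "\<exists>L. ((\<lambda>x. (g x - g a) / (h x - h a)) \<longlongrightarrow> L) (at_right a)"
  shows "Limsup (at_right a)
           (\<lambda>x. ereal ((h (cmv_xi h g h' g' a x) - h a) / (h x - h a))) \<ge> ereal (1 / exp 1)"
proof (rule ccontr)
  note ab = assms(1) and ch = assms(2) and cg = assms(3) and dh = assms(4) and dg = assms(5)
    and hpos = assms(6)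
  obtain L where lim: "((\<lambda>x. (g x - g a) / (h x - h a)) \<longlongrightarrow> L) (at_right a)" using assms(9) by blast
  define r where "r x = (h (cmv_xi h g h' g' a x) - h a) / (h x - h a)" for x
  assume "\<not> ?thesis"
  then have lt: "Limsup (at_right a) (\<lambda>x. ereal (r x)) < ereal (1 / exp 1)" unfolding r_def by simp
  obtain c0 where c0: "Limsup (at_right a) (\<lambda>x. ereal (r x)) < ereal c0" "ereal c0 < ereal (1 / exp 1)"
    using ereal_dense2[OF lt] by blast
  define c where "c = max c0 (1 / (2 * exp 1))"
  have cpos: "0 < c" unfolding c_def by (simp add: less_max_iff_disj)
  have "1 / (2 * exp 1) < 1 / exp (1::real)" by (simp add: divide_strict_left_mono)
  then have "c < 1 / exp 1" using c0(2) unfolding c_def by simp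
  then have cle: "c < exp (-1)" by (simp add: exp_minus divide_inverse)
  have "ereal c0 \<le> ereal c" unfolding c_def by simp
  then have "Limsup (at_right a) (\<lambda>x. ereal (r x)) < ereal c" using c0(1) by order
  from Limsup_lessD[OF this] have "eventually (\<lambda>x. r x < c) (at_right a)" by simp
  then obtain b' where b': "b' > a" "\<And>y. a < y \<Longrightarrow> y < b' \<Longrightarrow> r y < c"
    unfolding eventually_at_right_field by blast
  define x0 where "x0 = (a + min b' b) / 2"
  have x0: "a < x0" "x0 < b'" "x0 < b" unfolding x0_def using b' ab by auto
  have hsm: "h s < h t" if "a \<le> s" "s < t" "t < b" for s t
  proof (rule DERIV_pos_imp_increasing_open[OF that(2)])
    fix z assume "s < z" "z < t"
    then have "z \<in> {a<..<b}" using that by auto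
    then show "\<exists>y. DERIV h z :> y \<and> 0 < y" using dh hpos by blast
  next
    have "{s..t} \<subseteq> {a..<b}" using that by auto
    then show "continuous_on {s..t} h" by (rule continuous_on_subset[OF ch])
  qed
  define H where "H t = h t - h a" for t
  define G where "G t = g t - g a" for t
  have sub: "{a..x0} \<subseteq> {a..<b}" using x0 by auto
  show False
  proof (rule core[where H=H and G=G and H'=h' and G'=g' and L=L and c=c])
    show "a < x0" by fact
    show "continuous_on {a..x0} H" unfolding H_def
      by (intro continuous_on_diff continuous_on_const continuous_on_subset[OF ch sub])
    show "continuous_on {a..x0} G" unfolding G_def
      by (intro continuous_on_diff continuous_on_const continuous_on_subset[OF cg sub])
    show "H a = 0" unfolding H_def by simp
    show "(H has_real_derivative h' t) (at t)" if "a < t" "t < x0" for t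
    proof -
      have "t \<in> {a<..<b}" using that x0 by auto
      from DERIV_diff[OF dh[OF this] DERIV_const[of "h a"]] show ?thesis unfolding H_def by simp
    qed
    show "(G has_real_derivative g' t) (at t)" if "a < t" "t < x0" for t
    proof -
      have "t \<in> {a<..<b}" using that x0 by auto
      from DERIV_diff[OF dg[OF this] DERIV_const[of "g a"]] show ?thesis unfolding G_def by simp
    qed
    show "strict_mono_on {a..x0} H"
      unfolding H_def by (rule strict_mono_onI) (use hsm x0 in auto)
    show "((\<lambda>x. G x / H x) \<longlongrightarrow> L) (at_right a)" unfolding G_def H_def using lim .
    show "0 < c" by fact
    show "c < exp (-1)" by fact
    fix x t assume xt: "a < t" "t < x" "x \<le> x0" "c * H x \<le> H t"
    show "g' t \<noteq> G x / H x * h' t"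
    proof
      assume eq: "g' t = G x / H x * h' t"
      define S where "S = {\<tau> \<in> {a<..<x}. (g x - g a) / (h x - h a) = g' \<tau> / h' \<tau>}"
      have tb: "t \<in> {a<..<b}" using xt x0 by auto
      have "h' t > 0" using hpos[OF tb] .
      then have "g' t / h' t = G x / H x" using eq by simp
      then have tS: "t \<in> S" unfolding S_def G_def H_def using xt by auto
      have bdd: "bdd_above S" unfolding S_def by (rule bdd_aboveI[of _ x]) auto
      have xi: "cmv_xi h g h' g' a x = Sup S" unfolding cmv_xi_def S_def ..
      have t_le: "t \<le> Sup S" by (rule cSup_upper[OF tS bdd])
      have le_x: "Sup S \<le> x" by (rule cSup_least) (use tS S_def in auto)
      have "h t \<le> h (Sup S)"
        using hsm[of t "Sup S"] t_le le_x xt x0 by (cases "t = Sup S") auto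
      have Hx: "0 < H x" unfolding H_def using hsm[of a x] xt x0 by auto
      have "r x < c" using b'(2)[of x] xt x0 by auto
      then have "(h (Sup S) - h a) / H x < c" unfolding r_def xi H_def by simp
      then have "h (Sup S) - h a < c * H x" using Hx by (simp add: divide_less_eq)
      then show False using xt(4) \<open>h t \<le> h (Sup S)\<close> unfolding H_def by simp
    qed
  qed
qed

end
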